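(* Let $D=(N,A)$, $\mathcal{K}$, $\{D^k\}_{k\in\mathcal{K}}$ be an instance of SND-RR with time horizon $T$, $\mathcal{A}$ a valid arc partition, $G=G(D,\mathcal{A})=(V,E)$ the auxiliary flat network, and $G_S=(V_S,E_S\cup F_S)$ a partial network of $G$ satisfying properties (P1$'$) and (P2$'$) below. Then the optimal value of SND-RR$(G_S)$ is a lower bound on the optimal value of SND-RR$(G_T)$. (P1$'$) For all $k\in\mathcal{K}$, $(o'_k,r_k)\in V_S$ and $(d^0_k,l_k)\in V_S$; for all $v\in N$, $(v^0,T)\in V_S$ and $(u,0)\in V_S$ for all $u\in\mathcal{V}(v)$. (P2$'$) For all $xz\in E$ and all $(x,t)\in V_S$ with $t+\tau_{xz}\le T$, we have $((x,t),(z,t'))\in E_S$ where $t'=\max\{r: r\le t+\tau_{xz},\ (z,r)\in V_S\}$.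
   Context: An instance of SND-RR consists of: a directed graph $D=(N,A)$; for each $vw\in A$ a transit time $\tau_{vw}\in\mathbb{Z}_{>0}$, fixed cost $f_{vw}>0$, capacity $u_{vw}\in\mathbb{Z}_{>0}$, per-unit cost $c^k_{vw}>0$ for each commodity $k$; commodities $\mathcal{K}$, each with origin $o_k$, destination $d_k$, demand $q_k$, release time $r_k$, deadline $l_k$ (integers, earliest release $0$); subgraphs $D^k=(N^k,A^k)\subseteq D$ with $\delta^+_{D^k}(d_k)=\emptyset$ and $\delta^+_{D^k}(v)\ne\emptyset$ for $v\in N^k\setminus\{d_k\}$. $T=\max_kl_k$, $[T]=\{0,\dots,T\}$. For a timed arc $a=((v,t),(w,t'))$ with underlying arc $vw$: $u_a=u_{vw}$, $f_a=f_{vw}$, $c^k_a=c^k_{vw}$, $\tau_a=\tau_{vw}$ (not $t'-t$). $x^k(S)=\sum_{a\in S}x^k_a$; $\delta^\pm_H(v,t)$ are outgoing/incoming timed arcs in $H$. Valid partition: $\mathcal{A}=\{\mathcal{A}_v\}_{v\in N}$, each $\mathcal{A}_v$ a partition of $\delta^+_D(v)$, such that for each $k$, $\delta^+_{D^k}(v)\subseteq A_i$ for some $A_i\in\mathcal{A}_v$. Auxiliary network $G=(V,E)$: $\mathcal{V}(v)=\{v^0,\dots,v^{|\mathcal{A}_v|}\}$ (copy $v^i$ per part $A_i\in\mathcal{A}_v$, terminal copy $v^0$), $V=\bigcup_v\mathcal{V}(v)$, $E=\{v^iw^j:vw\in A_i\in\mathcal{A}_v,w^j\in\mathcal{V}(w)\}$,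 each $v^iw^j$ with the transit time and costs of $vw$. With $\mathcal{K}(A_i)=\{k:\emptyset\ne\delta^+_{D^k}(v)\subseteq A_i\}$: $G^k=(V^k,E^k)$, $V^k=\{v^i:v\in N^k,A_i\in\mathcal{A}_v,k\in\mathcal{K}(A_i)\}\cup\{d^0_k\}$, $E^k=\{v^iw^j:vw\in A^k,v^i,w^j\in V^k\}$; $o'_k$ is the unique copy of $o_k$ in $V^k$. Full time-expanded network of $G$: $G_T=(V_T,E_T\cup F_T)$ with $V_T=V\times[T]$, movement arcs $((x,t),(z,t+\tau_{xz}))$ for $xz\in E$, $t+\tau_{xz}\le T$, holdover arcs $((x,t),(x,t+1))$; similarly $G^k_T=(V^k_T,E^k_T\cup F^k_T)$, and $D_T=(N_T,A_T\cup H_T)$ for $D$. For $a=((v,t),(w,t'))\in A_T$, $\mathcal{E}_T(a)=\{((v^i,t),(w^j,t')):vw\in A_i\in\mathcal{A}_v,w^j\in\mathcal{V}(w)\}$. SND-RR$(G_T)$: minimize $\sum_{a\in A_T}f_ay_a+\sum_k\sum_{e\in E_T}c^k_eq_kx^k_e$ s.t. for all $k$, $(x,t)\in V^k_T$: $x^k(\delta^+_{G^k_T}(x,t))-x^k(\delta^-_{G^k_T}(x,t))$ is $1$ at $(o'_k,r_k)$, $-1$ at $(d^0_k,l_k)$, $0$ otherwise; $\sum_k\sum_{e\in\mathcal{E}_T(a)}q_kx^k_e\le u_ay_a$ for $a\in A_T$; $x^k_e\in\{0,1\}$ for $e\in E^k_T\cup F^k_T$ ($0$ otherwise); $y_a\in\mathbb{Z}_{\ge0}$.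 A partial network of $G$ is $G_S=(V_S,E_S\cup F_S)$ with $V_S\subseteq V_T$, $E_S\subseteq\{((x,t),(z,t')):(x,t)\in V_T,xz\in E,t'\le t+\tau_{xz}\le T\}$, and $F_S$ the holdover arcs joining each $(x,t)\in V_S$ to the next copy of $x$ in $V_S$. $G^k_S=(V^k_S,E^k_S\cup F^k_S)$: $V^k_S=\{(x,t)\in V_S:x\in V^k\}$, $E^k_S=\{((x,t),(z,t'))\in E_S:xz\in E^k\}$, $F^k_S$ the arcs of $F_S$ on copies of nodes of $V^k$. The associated partial network of $D$ is $D_S(G_S)=(N_S,A_S\cup H_S)$ with $N_S=\{(v,t):(u,t)\in V_S\text{ for some }u\in\mathcal{V}(v)\}$ and $A_S=\{((v,t),(w,t')):(v,t)\in N_S,vw\in A,t+\tau_{vw}\le T,t'=\max\{r:r\le t+\tau_{vw},(w,r)\in N_S\}\}$. For $a=((v,t),(w,t'))\in A_S$, $\mathcal{E}_S(a)=\{((v^i,t),(w^j,t''))\in E_S: w^j\in\mathcal{V}(w), vw\in A_i\in\mathcal{A}_v\}$. SND-RR$(G_S)$: minimize $\sum_{a\in A_S}f_ay_a+\sum_k\sum_{e\in E_S}c^k_eq_kx^k_e$ s.t. for all $k$, $(x,t)\in V^k_S$: $x^k(\delta^+_{G^k_S}(x,t))-x^k(\delta^-_{G^k_S}(x,t))$ is $1$ at $(o'_k,r_k)$, $-1$ at $(d^0_k,l_k)$, $0$ otherwise; $\sum_k\sum_{e\in\mathcal{E}_S(a)}q_kx^k_e\le u_ay_a$ for all $a\in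 A_S$; $\sum_{e\in E^k_S}\tau_ex^k_e\le l_k-r_k$ for all $k$; $x^k_e\in\{0,1\}$ for $e\in E^k_S\cup F^k_S$ ($0$ otherwise); $y_a\in\mathbb{Z}_{\ge0}$ for $a\in A_S$. *)

theory Defs
  imports Main "HOL-Library.Disjoint_Sets" "HOL-Library.Extended_Real"
begin

record ('n, 'k) sndrr =
  nodes :: "'n set"
  arcs  :: "('n \<times> 'n) set"
  tau   :: "'n \<times> 'n \<Rightarrow> nat"
  fcost :: "'n \<times> 'n \<Rightarrow> real"
  cap   :: "'n \<times> 'n \<Rightarrow> nat"
  ucost :: "'k \<Rightarrow> 'n \<times> 'n \<Rightarrow> real"
  comms :: "'k set"
  orig  :: "'k \<Rightarrow> 'n"
  dest  :: "'k \<Rightarrow> 'n"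
  dem   :: "'k \<Rightarrow> nat"
  rel   :: "'k \<Rightarrow> nat"
  dl    :: "'k \<Rightarrow> nat"
  subN  :: "'k \<Rightarrow> 'n set"
  subA  :: "'k \<Rightarrow> ('n \<times> 'n) set"

definition outarcs :: "('n \<times> 'n) set \<Rightarrow> 'n \<Rightarrow> ('n \<times> 'n) set" where
  "outarcs B v = {a \<in> B. fst a = v}"

definition snd_instance :: "('n, 'k, 'z) sndrr_scheme \<Rightarrow> bool" where
  "snd_instance I \<longleftrightarrow>
     finite (nodes I) \<and> arcs I \<subseteq> nodes I \<times> nodes I \<and> finite (comms I) \<and>
     (\<forall>a\<in>arcs I. tau I a > 0 \<and> fcost I a > 0 \<and> cap I a > 0 \<and> (\<forall>k\<in>comms I. ucost I k a > 0)) \<and>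
     (\<forall>k\<in>comms I. orig I k \<in> subN I k \<and> dest I k \<in> subN I k \<and> subN I k \<subseteq> nodes I \<and>
        subA I k \<subseteq> arcs I \<and> subA I k \<subseteq> subN I k \<times> subN I k \<and>
        outarcs (subA I k) (dest I k) = {} \<and>
        (\<forall>v \<in> subN I k - {dest I k}. outarcs (subA I k) v \<noteq> {})) \<and>
     (\<exists>k\<in>comms I. rel I k = 0)"

definition horizon :: "('n, 'k, 'z) sndrr_scheme \<Rightarrow> nat" where
  "horizon I = Max (dl I ` comms I)"

section \<open>Valid partitions and the auxiliary network G\<close>

text \<open>A partition P assigns to each node v the set of parts of its out-arcs.
  Copies of v: the terminal copy (v, None) and (v, Some X) for each part X.\<close>

type_synonym 'n part = "'n \<Rightarrow> ('n \<times> 'n) set set"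
type_synonym 'n gnode = "'n \<times> ('n \<times> 'n) set option"
type_synonym 'n tnode = "'n gnode \<times> nat"
type_synonym 'n tarc = "'n tnode \<times> 'n tnode"
type_synonym 'n darc = "('n \<times> nat) \<times> ('n \<times> nat)"

definition valid_partition :: "('n, 'k, 'z) sndrr_scheme \<Rightarrow> 'n part \<Rightarrow> bool" where
  "valid_partition I P \<longleftrightarrow>
     (\<forall>v\<in>nodes I. partition_on (outarcs (arcs I) v) (P v)) \<and>
     (\<forall>k\<in>comms I. \<forall>v\<in>nodes I. outarcs (subA I k) v \<noteq> {} \<longrightarrow>
        (\<exists>X\<in>P v. outarcs (subA I k) v \<subseteq> X))"

definition copies :: "'n part \<Rightarrow> 'n \<Rightarrow> 'n gnode set" where
  "copies P v = insert (v, None) ((\<lambda>X. (v, Some X)) ` P v)"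

definition Vaux :: "('n, 'k, 'z) sndrr_scheme \<Rightarrow> 'n part \<Rightarrow> 'n gnode set" where
  "Vaux I P = (\<Union>v\<in>nodes I. copies P v)"

definition Eaux :: "('n, 'k, 'z) sndrr_scheme \<Rightarrow> 'n part \<Rightarrow> ('n gnode \<times> 'n gnode) set" where
  "Eaux I P = {((v, Some X), z) | v X z. v \<in> nodes I \<and> X \<in> P v \<and>
                 (v, fst z) \<in> X \<and> z \<in> copies P (fst z)}"

definition gtau :: "('n, 'k, 'z) sndrr_scheme \<Rightarrow> 'n gnode \<times> 'n gnode \<Rightarrow> nat" where
  "gtau I e = tau I (fst (fst e), fst (snd e))"

definition uarc :: "'n tarc \<Rightarrow> 'n \<times> 'n" where
  "uarc e = (fst (fst (fst e)), fst (fst (snd e)))"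

definition Kpart :: "('n, 'k, 'z) sndrr_scheme \<Rightarrow> 'n \<Rightarrow> ('n \<times> 'n) set \<Rightarrow> 'k set" where
  "Kpart I v X = {k \<in> comms I. outarcs (subA I k) v \<noteq> {} \<and> outarcs (subA I k) v \<subseteq> X}"

definition Vk :: "('n, 'k, 'z) sndrr_scheme \<Rightarrow> 'n part \<Rightarrow> 'k \<Rightarrow> 'n gnode set" where
  "Vk I P k = {(v, Some X) | v X. v \<in> subN I k \<and> X \<in> P v \<and> k \<in> Kpart I v X}
              \<union> {(dest I k, None)}"

definition Ek :: "('n, 'k, 'z) sndrr_scheme \<Rightarrow> 'n part \<Rightarrow> 'k \<Rightarrow> ('n gnode \<times> 'n gnode) set" where
  "Ek I P k = {(x, z) \<in> Eaux I P. (fst x, fst z) \<in> subA I k \<and> x \<in> Vk I P k \<and> z \<in> Vk I P k}"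

text \<open>o'_k: the unique copy of o_k in V^k.\<close>
definition origc :: "('n, 'k, 'z) sndrr_scheme \<Rightarrow> 'n part \<Rightarrow> 'k \<Rightarrow> 'n gnode" where
  "origc I P k = (THE x. x \<in> Vk I P k \<and> fst x = orig I k)"

definition outflow :: "'n tarc set \<Rightarrow> 'n tarc set \<Rightarrow> ('n tarc \<Rightarrow> real) \<Rightarrow> ('n tarc \<Rightarrow> real)
                        \<Rightarrow> 'n tnode \<Rightarrow> real" where
  "outflow Em Fh xm xh p = (\<Sum>e\<in>{e\<in>Em. fst e = p}. xm e) + (\<Sum>e\<in>{e\<in>Fh. fst e = p}. xh e)"

definition inflow :: "'n tarc set \<Rightarrow> 'n tarc set \<Rightarrow> ('n tarc \<Rightarrow> real) \<Rightarrow> ('n tarc \<Rightarrow> real)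
                        \<Rightarrow> 'n tnode \<Rightarrow> real" where
  "inflow Em Fh xm xh p = (\<Sum>e\<in>{e\<in>Em. snd e = p}. xm e) + (\<Sum>e\<in>{e\<in>Fh. snd e = p}. xh e)"

definition flowrhs :: "('n, 'k, 'z) sndrr_scheme \<Rightarrow> 'n part \<Rightarrow> 'k \<Rightarrow> 'n tnode \<Rightarrow> real" where
  "flowrhs I P k p = (if p = (origc I P k, rel I k) then 1 else 0)
                  - (if p = ((dest I k, None), dl I k) then 1 else 0)"

text \<open>A solution: flow variables on movement arcs, flow variables on holdover arcs
  (kept apart, since these are different arcs), and integer design variables on timed arcs of D.\<close>
type_synonym ('n, 'k) sol = "('k \<Rightarrow> 'n tarc \<Rightarrow> real) \<times> ('k \<Rightarrow> 'n tarc \<Rightarrow> real) \<times> ('n darc \<Rightarrow> nat)"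

section \<open>The full time-expanded network G_T and SND-RR(G_T)\<close>

definition VT :: "('n, 'k, 'z) sndrr_scheme \<Rightarrow> 'n part \<Rightarrow> 'n tnode set" where
  "VT I P = Vaux I P \<times> {0..horizon I}"

definition ET :: "('n, 'k, 'z) sndrr_scheme \<Rightarrow> 'n part \<Rightarrow> 'n tarc set" where
  "ET I P = {((x, t), (z, t + gtau I (x, z))) | x z t.
               (x, z) \<in> Eaux I P \<and> t + gtau I (x, z) \<le> horizon I}"

definition FT :: "('n, 'k, 'z) sndrr_scheme \<Rightarrow> 'n part \<Rightarrow> 'n tarc set" where
  "FT I P = {((x, t), (x, t + 1)) | x t. x \<in> Vaux I P \<and> t + 1 \<le> horizon I}"

definition VkT :: "('n, 'k, 'z) sndrr_scheme \<Rightarrow> 'n part \<Rightarrow> 'k \<Rightarrow> 'n tnode set" where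
  "VkT I P k = Vk I P k \<times> {0..horizon I}"

definition EkT :: "('n, 'k, 'z) sndrr_scheme \<Rightarrow> 'n part \<Rightarrow> 'k \<Rightarrow> 'n tarc set" where
  "EkT I P k = {((x, t), (z, t + gtau I (x, z))) | x z t.
               (x, z) \<in> Ek I P k \<and> t + gtau I (x, z) \<le> horizon I}"

definition FkT :: "('n, 'k, 'z) sndrr_scheme \<Rightarrow> 'n part \<Rightarrow> 'k \<Rightarrow> 'n tarc set" where
  "FkT I P k = {((x, t), (x, t + 1)) | x t. x \<in> Vk I P k \<and> t + 1 \<le> horizon I}"

definition AT :: "('n, 'k, 'z) sndrr_scheme \<Rightarrow> 'n darc set" where
  "AT I = {((v, t), (w, t + tau I (v, w))) | v w t.
             (v, w) \<in> arcs I \<and> t + tau I (v, w) \<le> horizon I}"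

definition calET :: "'n part \<Rightarrow> 'n darc \<Rightarrow> 'n tarc set" where
  "calET P a = (case a of ((v, t), (w, t')) \<Rightarrow>
      {(((v, Some X), t), (z, t')) | X z. X \<in> P v \<and> (v, w) \<in> X \<and> z \<in> copies P w})"

definition feasible_T :: "('n, 'k, 'z) sndrr_scheme \<Rightarrow> 'n part \<Rightarrow> ('n, 'k) sol \<Rightarrow> bool" where
  "feasible_T I P s = (case s of (xm, xh, y) \<Rightarrow>
     (\<forall>k\<in>comms I. \<forall>p\<in>VkT I P k.
        outflow (EkT I P k) (FkT I P k) (xm k) (xh k) p
        - inflow (EkT I P k) (FkT I P k) (xm k) (xh k) p = flowrhs I P k p) \<and>
     (\<forall>a\<in>AT I. (\<Sum>k\<in>comms I. \<Sum>e\<in>calET P a. real (dem I k) * xm k e) \<le> real (cap I (fst (fst a), fst (snd a))) * real (y a)) \<and>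
     (\<forall>k\<in>comms I. \<forall>e.
        (e \<in> EkT I P k \<longrightarrow> xm k e \<in> {0, 1}) \<and> (e \<notin> EkT I P k \<longrightarrow> xm k e = 0) \<and>
        (e \<in> FkT I P k \<longrightarrow> xh k e \<in> {0, 1}) \<and> (e \<notin> FkT I P k \<longrightarrow> xh k e = 0)))"

definition cost_T :: "('n, 'k, 'z) sndrr_scheme \<Rightarrow> 'n part \<Rightarrow> ('n, 'k) sol \<Rightarrow> real" where
  "cost_T I P s = (case s of (xm, xh, y) \<Rightarrow>
     (\<Sum>a\<in>AT I. fcost I (fst (fst a), fst (snd a)) * real (y a))
     + (\<Sum>k\<in>comms I. \<Sum>e\<in>ET I P. ucost I k (uarc e) * real (dem I k) * xm k e))"

definition opt_T :: "('n, 'k, 'z) sndrr_scheme \<Rightarrow> 'n part \<Rightarrow> ereal" where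
  "opt_T I P = (INF s\<in>{s. feasible_T I P s}. ereal (cost_T I P s))"

section \<open>Partial networks G_S and SND-RR(G_S)\<close>

definition partial_network ::
  "('n, 'k, 'z) sndrr_scheme \<Rightarrow> 'n part \<Rightarrow> 'n tnode set \<Rightarrow> 'n tarc set \<Rightarrow> bool" where
  "partial_network I P VS ES \<longleftrightarrow> VS \<subseteq> VT I P \<and>
     ES \<subseteq> {((x, t), (z, t')) | x z t t'. (x, t) \<in> VT I P \<and> (x, z) \<in> Eaux I P \<and>
                t' \<le> t + gtau I (x, z) \<and> t + gtau I (x, z) \<le> horizon I}"

definition FS :: "'n tnode set \<Rightarrow> 'n tarc set" where
  "FS VS = {((x, t), (x, t')) | x t t'. (x, t) \<in> VS \<and> (x, t') \<in> VS \<and> t < t' \<and>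
              (\<forall>s. t < s \<and> s < t' \<longrightarrow> (x, s) \<notin> VS)}"

definition VkS :: "('n, 'k, 'z) sndrr_scheme \<Rightarrow> 'n part \<Rightarrow> 'n tnode set \<Rightarrow> 'k \<Rightarrow> 'n tnode set" where
  "VkS I P VS k = {p \<in> VS. fst p \<in> Vk I P k}"

definition EkS :: "('n, 'k, 'z) sndrr_scheme \<Rightarrow> 'n part \<Rightarrow> 'n tarc set \<Rightarrow> 'k \<Rightarrow> 'n tarc set" where
  "EkS I P ES k = {e \<in> ES. (fst (fst e), fst (snd e)) \<in> Ek I P k}"

definition FkS :: "('n, 'k, 'z) sndrr_scheme \<Rightarrow> 'n part \<Rightarrow> 'n tnode set \<Rightarrow> 'k \<Rightarrow> 'n tarc set" where
  "FkS I P VS k = {e \<in> FS VS. fst (fst e) \<in> Vk I P k}"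

definition latest :: "('a \<times> nat) set \<Rightarrow> 'a \<Rightarrow> nat \<Rightarrow> nat \<Rightarrow> bool" where
  "latest S z b t' \<longleftrightarrow> (z, t') \<in> S \<and> t' \<le> b \<and> (\<forall>r. (z, r) \<in> S \<and> r \<le> b \<longrightarrow> r \<le> t')"

definition NS :: "('n, 'k, 'z) sndrr_scheme \<Rightarrow> 'n part \<Rightarrow> 'n tnode set \<Rightarrow> ('n \<times> nat) set" where
  "NS I P VS = {(v, t) | v t. v \<in> nodes I \<and> (\<exists>u\<in>copies P v. (u, t) \<in> VS)}"

definition AS :: "('n, 'k, 'z) sndrr_scheme \<Rightarrow> 'n part \<Rightarrow> 'n tnode set \<Rightarrow> 'n darc set" where
  "AS I P VS = {((v, t), (w, t')) | v w t t'. (v, t) \<in> NS I P VS \<and> (v, w) \<in> arcs I \<and>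
                  t + tau I (v, w) \<le> horizon I \<and> latest (NS I P VS) w (t + tau I (v, w)) t'}"

definition calES :: "'n part \<Rightarrow> 'n tarc set \<Rightarrow> 'n darc \<Rightarrow> 'n tarc set" where
  "calES P ES a = (case a of ((v, t), (w, t')) \<Rightarrow>
      {e \<in> ES. \<exists>X z t''. e = (((v, Some X), t), (z, t'')) \<and> X \<in> P v \<and> (v, w) \<in> X \<and> z \<in> copies P w})"

definition feasible_S ::
  "('n, 'k, 'z) sndrr_scheme \<Rightarrow> 'n part \<Rightarrow> 'n tnode set \<Rightarrow> 'n tarc set \<Rightarrow> ('n, 'k) sol \<Rightarrow> bool" where
  "feasible_S I P VS ES s = (case s of (xm, xh, y) \<Rightarrow>
     (\<forall>k\<in>comms I. \<forall>p\<in>VkS I P VS k.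
        outflow (EkS I P ES k) (FkS I P VS k) (xm k) (xh k) p
        - inflow (EkS I P ES k) (FkS I P VS k) (xm k) (xh k) p = flowrhs I P k p) \<and>
     (\<forall>a\<in>AS I P VS. (\<Sum>k\<in>comms I. \<Sum>e\<in>calES P ES a. real (dem I k) * xm k e)
                       \<le> real (cap I (fst (fst a), fst (snd a))) * real (y a)) \<and>
     (\<forall>k\<in>comms I. (\<Sum>e\<in>EkS I P ES k. real (tau I (uarc e)) * xm k e) \<le> real (dl I k) - real (rel I k)) \<and>
     (\<forall>k\<in>comms I. \<forall>e.
        (e \<in> EkS I P ES k \<longrightarrow> xm k e \<in> {0, 1}) \<and> (e \<notin> EkS I P ES k \<longrightarrow> xm k e = 0) \<and>
        (e \<in> FkS I P VS k \<longrightarrow> xh k e \<in> {0, 1}) \<and> (e \<notin> FkS I P VS k \<longrightarrow> xh k e = 0)))"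

definition cost_S ::
  "('n, 'k, 'z) sndrr_scheme \<Rightarrow> 'n part \<Rightarrow> 'n tnode set \<Rightarrow> 'n tarc set \<Rightarrow> ('n, 'k) sol \<Rightarrow> real" where
  "cost_S I P VS ES s = (case s of (xm, xh, y) \<Rightarrow>
     (\<Sum>a\<in>AS I P VS. fcost I (fst (fst a), fst (snd a)) * real (y a))
     + (\<Sum>k\<in>comms I. \<Sum>e\<in>ES. ucost I k (uarc e) * real (dem I k) * xm k e))"

definition opt_S :: "('n, 'k, 'z) sndrr_scheme \<Rightarrow> 'n part \<Rightarrow> 'n tnode set \<Rightarrow> 'n tarc set \<Rightarrow> ereal" where
  "opt_S I P VS ES = (INF s\<in>{s. feasible_S I P VS ES s}. ereal (cost_S I P VS ES s))"

definition P1' :: "('n, 'k, 'z) sndrr_scheme \<Rightarrow> 'n part \<Rightarrow> 'n tnode set \<Rightarrow> bool" where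
  "P1' I P VS \<longleftrightarrow>
     (\<forall>k\<in>comms I. (origc I P k, rel I k) \<in> VS \<and> ((dest I k, None), dl I k) \<in> VS) \<and>
     (\<forall>v\<in>nodes I. ((v, None), horizon I) \<in> VS \<and> (\<forall>u\<in>copies P v. (u, 0) \<in> VS))"

definition P2' :: "('n, 'k, 'z) sndrr_scheme \<Rightarrow> 'n part \<Rightarrow> 'n tnode set \<Rightarrow> 'n tarc set \<Rightarrow> bool" where
  "P2' I P VS ES \<longleftrightarrow>
     (\<forall>(x, z)\<in>Eaux I P. \<forall>t t'. (x, t) \<in> VS \<and> t + gtau I (x, z) \<le> horizon I \<and>
        latest VS z (t + gtau I (x, z)) t' \<longrightarrow> ((x, t), (z, t')) \<in> ES)"

end

theory Submission
  imports Defs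
begin



fun chn :: "'a \<Rightarrow> ('b \<times> 'a \<times> 'a) list \<Rightarrow> 'a \<Rightarrow> bool" where
  "chn s [] t = (s = t)"
| "chn s (x # xs) t = (fst (snd x) = s \<and> chn (snd (snd x)) xs t)"

abbreviation nds :: "'a \<Rightarrow> ('b \<times> 'a \<times> 'a) list \<Rightarrow> 'a list" where
  "nds s es \<equiv> s # map (\<lambda>x. snd (snd x)) es"

lemma chn_append: "chn s (xs @ ys) t \<longleftrightarrow> (\<exists>m. chn s xs m \<and> chn m ys t)"
  by (induction xs arbitrary: s) auto

lemma chn_tail_in: "chn q es t \<Longrightarrow> y \<in> set es \<Longrightarrow> fst (snd y) \<in> set (nds q (butlast es))"
proof (induction es arbitrary: q)
  case (Cons x es)
  then show ?case by (cases es) auto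
qed simp

lemma chn_tail_in': "chn q es t \<Longrightarrow> y \<in> set es \<Longrightarrow> fst (snd y) \<in> set (nds q es)"
  by (induction es arbitrary: q) auto

lemma chn_suffix:
  "chn q es t \<Longrightarrow> distinct (nds q es) \<Longrightarrow> s \<in> set (nds q es) \<Longrightarrow>
   \<exists>es'. set es' \<subseteq> set es \<and> chn s es' t \<and> distinct (nds s es')"
proof (induction es arbitrary: q)
  case Nil
  then show ?case by auto
next
  case (Cons x es)
  show ?case
  proof (cases "s = q")
    case True
    then show ?thesis using Cons.prems by blast
  next
    case False
    then have "s \<in> set (nds (snd (snd x)) es)" using Cons.prems by auto
    moreover have "distinct (nds (snd (snd x)) es)" using Cons.prems by auto
    moreover have "chn (snd (snd x)) es t" using Cons.prems by auto
    ultimately obtain es' where "set es' \<subseteq> set es" "chn s es' t" "distinct (nds s es')"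
      using Cons.IH by blast
    then show ?thesis by auto
  qed
qed

lemma chn_simplify:
  "chn s es t \<Longrightarrow> \<exists>es'. set es' \<subseteq> set es \<and> chn s es' t \<and> distinct (nds s es')"
proof (induction es arbitrary: s)
  case Nil
  then show ?case by auto
next
  case (Cons x es)
  define q where "q = snd (snd x)"
  have x: "fst (snd x) = s" "chn q es t" using Cons.prems by (auto simp: q_def)
  obtain es2 where es2: "set es2 \<subseteq> set es" "chn q es2 t" "distinct (nds q es2)"
    using Cons.IH x by blast
  show ?case
  proof (cases "s \<in> set (nds q es2)")
    case True
    then show ?thesis using chn_suffix[OF es2(2,3) True] es2 by auto
  next
    case False
    then show ?thesis
      by (intro exI[of _ "x # es2"]) (use es2 x q_def in auto)
  qed
qed

lemma chn_conserv:
  "chn s es t \<Longrightarrow> distinct (nds s es) \<Longrightarrow>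
   real (card {x\<in>set es. fst (snd x) = p}) - real (card {x\<in>set es. snd (snd x) = p})
   = (if p = s then 1 else 0) - (if p = t then 1 else 0)"
proof (induction es arbitrary: s)
  case Nil
  then show ?case by simp
next
  case (Cons x es)
  define q where "q = snd (snd x)"
  have x: "fst (snd x) = s" "chn q es t" using Cons.prems by (auto simp: q_def)
  have d: "distinct (nds q es)" "s \<notin> set (nds q es)" using Cons.prems by (auto simp: q_def)
  have tails: "\<And>y. y \<in> set es \<Longrightarrow> fst (snd y) \<noteq> s"
    using chn_tail_in'[OF x(2)] d(2) by metis
  have heads: "\<And>y. y \<in> set es \<Longrightarrow> snd (snd y) \<noteq> s"
    using d(2) by auto
  have xn: "x \<notin> set es" using tails x(1) by blast
  have IH: "real (card {x\<in>set es. fst (snd x) = p}) - real (card {x\<in>set es. snd (snd x) = p})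
   = (if p = q then 1 else 0) - (if p = t then 1 else 0)" using Cons.IH x(2) d(1) by blast
  have c1: "card {y\<in>set (x#es). fst (snd y) = p} = (if p = s then 1 else 0) + card {y\<in>set es. fst (snd y) = p}"
  proof (cases "p = s")
    case True
    then have "{y\<in>set (x#es). fst (snd y) = p} = {x}" using tails x(1) by auto
    moreover have "{y\<in>set es. fst (snd y) = p} = {}" using tails True by auto
    ultimately show ?thesis using True by simp
  next
    case False
    then have "{y\<in>set (x#es). fst (snd y) = p} = {y\<in>set es. fst (snd y) = p}" using x(1) by auto
    then show ?thesis using False by simp
  qed
  have c2: "card {y\<in>set (x#es). snd (snd y) = p} = (if p = q then 1 else 0) + card {y\<in>set es. snd (snd y) = p}"
  proof (cases "p = q")
    case True
    then have "{y\<in>set (x#es). snd (snd y) = p} = insert x {y\<in>set es. snd (snd y) = p}" using q_def by auto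
    then show ?thesis using True xn by simp
  next
    case False
    then have "{y\<in>set (x#es). snd (snd y) = p} = {y\<in>set es. snd (snd y) = p}" using q_def by auto
    then show ?thesis using False by simp
  qed
  have "p = s \<Longrightarrow> p \<noteq> q" using d(2) by auto
  then show ?case using c1 c2 IH by auto
qed



definition good :: "'a set \<Rightarrow> 'a set \<Rightarrow> ('a \<Rightarrow> real) \<Rightarrow> ('a \<Rightarrow> real) \<Rightarrow> bool \<times> 'a \<Rightarrow> bool" where
  "good Em Fh xm xh be = (if fst be then snd be \<in> Em \<and> xm (snd be) = 1 else snd be \<in> Fh \<and> xh (snd be) = 1)"

lemma walkT:
  fixes Em Fh :: "'n tarc set" and xm xh :: "'n tarc \<Rightarrow> real"
  assumes fin: "finite Em" "finite Fh"
    and incE: "\<forall>e\<in>Em. snd (fst e) < snd (snd e)" and incF: "\<forall>e\<in>Fh. snd (fst e) < snd (snd e)"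
    and xmv: "\<forall>e\<in>Em. xm e \<in> {0,1}" and xhv: "\<forall>e\<in>Fh. xh e \<in> {0,1}"
    and tails: "\<forall>e\<in>Em \<union> Fh. fst e \<in> V"
    and cons: "\<forall>p\<in>V. outflow Em Fh xm xh p - inflow Em Fh xm xh p
                 = (if p = src then 1 else 0) - (if p = snk then 1 else 0)"
    and snk: "snk \<in> V"
  shows "\<exists>W. chn src W snk \<and> (\<forall>be\<in>set W. good Em Fh xm xh be)"
proof -
  have outnn: "outflow Em Fh xm xh p \<ge> 0" for p
    unfolding outflow_def using xmv xhv
    by (intro add_nonneg_nonneg sum_nonneg) auto
  have main: "\<forall>q. snd q = n \<longrightarrow> (q = src \<or> inflow Em Fh xm xh q \<noteq> 0) \<longrightarrow>
     (\<exists>W. chn src W q \<and> (\<forall>be\<in>set W. good Em Fh xm xh be))" for n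
  proof (induction n rule: less_induct)
    case (less n)
    show ?case
    proof (intro allI impI)
      fix q :: "'n tnode" assume qn: "snd q = n" and h: "q = src \<or> inflow Em Fh xm xh q \<noteq> 0"
      show "\<exists>W. chn src W q \<and> (\<forall>be\<in>set W. good Em Fh xm xh be)"
      proof (cases "q = src")
        case True
        then show ?thesis by (intro exI[of _ "[]"]) auto
      next
        case False
        then have "inflow Em Fh xm xh q \<noteq> 0" using h by auto
        then have "(\<Sum>e\<in>{e\<in>Em. snd e = q}. xm e) \<noteq> 0 \<or> (\<Sum>e\<in>{e\<in>Fh. snd e = q}. xh e) \<noteq> 0"
          unfolding inflow_def by auto
        then obtain b e where be: "good Em Fh xm xh (b, e)" "snd e = q"
        proof
          assume "(\<Sum>e\<in>{e\<in>Em. snd e = q}. xm e) \<noteq> 0"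
          then obtain e where "e \<in> {e\<in>Em. snd e = q}" "xm e \<noteq> 0"
            using sum.not_neutral_contains_not_neutral by blast
          then have "good Em Fh xm xh (True, e)" "snd e = q" using xmv unfolding good_def by auto
          then show thesis using that by blast
        next
          assume "(\<Sum>e\<in>{e\<in>Fh. snd e = q}. xh e) \<noteq> 0"
          then obtain e where "e \<in> {e\<in>Fh. snd e = q}" "xh e \<noteq> 0"
            using sum.not_neutral_contains_not_neutral by blast
          then have "good Em Fh xm xh (False, e)" "snd e = q" using xhv unfolding good_def by auto
          then show thesis using that by blast
        qed
        define p where "p = fst e"
        have eE: "e \<in> Em \<union> Fh" using be unfolding good_def by (auto split: if_splits)
        have pV: "p \<in> V" using tails eE p_def by auto
        have plt: "snd p < n" using incE incF eE p_def qn be(2) by auto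
        show ?thesis
        proof (cases "p = src")
          case True
          then show ?thesis using be p_def
            by (intro exI[of _ "[(b,e)]"]) auto
        next
          case False
          have "outflow Em Fh xm xh p \<ge> 1"
          proof (cases b)
            case True
            then have "e \<in> Em" "xm e = 1" using be unfolding good_def by auto
            moreover have "xm e \<le> (\<Sum>e\<in>{e\<in>Em. fst e = p}. xm e)"
              using p_def xmv fin \<open>e \<in> Em\<close> by (intro member_le_sum) auto
            ultimately have "1 \<le> (\<Sum>e\<in>{e\<in>Em. fst e = p}. xm e)" by simp
            moreover have "0 \<le> (\<Sum>e\<in>{e\<in>Fh. fst e = p}. xh e)" using xhv by (intro sum_nonneg) auto
            ultimately show ?thesis unfolding outflow_def by linarith
          next
            case False
            then have "e \<in> Fh" "xh e = 1" using be unfolding good_def by auto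
            moreover have "xh e \<le> (\<Sum>e\<in>{e\<in>Fh. fst e = p}. xh e)"
              using p_def xhv fin \<open>e \<in> Fh\<close> by (intro member_le_sum) auto
            ultimately have "1 \<le> (\<Sum>e\<in>{e\<in>Fh. fst e = p}. xh e)" by simp
            moreover have "0 \<le> (\<Sum>e\<in>{e\<in>Em. fst e = p}. xm e)" using xmv by (intro sum_nonneg) auto
            ultimately show ?thesis unfolding outflow_def by linarith
          qed
          moreover have "outflow Em Fh xm xh p - inflow Em Fh xm xh p \<le> 0"
            using cons pV False by auto
          ultimately have "inflow Em Fh xm xh p \<noteq> 0" by linarith
          then obtain W where W: "chn src W p" "\<forall>be\<in>set W. good Em Fh xm xh be"
            using less.IH[OF plt] by blast
          show ?thesis
          proof (intro exI[of _ "W @ [(b,e)]"] conjI)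
            show "chn src (W @ [(b, e)]) q"
              unfolding chn_append using W(1) be(2) p_def by (intro exI[of _ p]) simp
          qed (use W be in auto)
        qed
      qed
    qed
  qed
  show ?thesis
  proof (cases "snk = src")
    case True
    then show ?thesis by (intro exI[of _ "[]"]) auto
  next
    case False
    then have "outflow Em Fh xm xh snk - inflow Em Fh xm xh snk = -1" using cons snk by auto
    then have "inflow Em Fh xm xh snk \<noteq> 0" using outnn[of snk] by linarith
    then show ?thesis using main by blast
  qed
qed



definition rho :: "'n tnode set \<Rightarrow> 'n gnode \<Rightarrow> nat \<Rightarrow> nat" where
  "rho VS x t = (GREATEST r. r \<le> t \<and> (x, r) \<in> VS)"

definition piS :: "('n, 'k, 'z) sndrr_scheme \<Rightarrow> 'n tnode set \<Rightarrow> 'n tarc \<Rightarrow> 'n tarc" where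
  "piS I VS e = ((fst (fst e), rho VS (fst (fst e)) (snd (fst e))),
      (fst (snd e), rho VS (fst (snd e)) (rho VS (fst (fst e)) (snd (fst e)) + gtau I (fst (fst e), fst (snd e)))))"

lemma rho_latest:
  assumes "(x, 0) \<in> VS" shows "latest VS x t (rho VS x t)"
proof -
  have "(rho VS x t) \<le> t \<and> (x, rho VS x t) \<in> VS"
    unfolding rho_def by (rule GreatestI_nat[of _ 0 t]) (use assms in auto)
  moreover have "r \<le> rho VS x t" if "(x, r) \<in> VS" "r \<le> t" for r
    unfolding rho_def by (rule Greatest_le_nat[of _ r t]) (use that in auto)
  ultimately show ?thesis unfolding latest_def by auto
qed

lemma latest_unique: "latest S z b t1 \<Longrightarrow> latest S z b t2 \<Longrightarrow> t1 = t2"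
  unfolding latest_def by (meson le_antisym)

lemma latest_self: "(x, t) \<in> S \<Longrightarrow> latest S x t t"
  unfolding latest_def by auto

lemma rho_self: "(x, t) \<in> VS \<Longrightarrow> rho VS x t = t"
  unfolding rho_def by (rule Greatest_equality) auto

lemma rho_mono: "(x, 0) \<in> VS \<Longrightarrow> a \<le> b \<Longrightarrow> rho VS x a \<le> rho VS x b"
  using rho_latest[of x VS a] rho_latest[of x VS b] unfolding latest_def by auto

lemma hold_chain:
  assumes "(x, a) \<in> VS" "(x, b) \<in> VS" "a \<le> b"
  shows "\<exists>W. chn (x, a) W (x, b) \<and> (\<forall>be\<in>set W. \<not> fst be \<and> snd be \<in> FS VS \<and> fst (fst (snd be)) = x)"
  using assms
proof (induction "b - a" arbitrary: a rule: less_induct)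
  case less
  show ?case
  proof (cases "a = b")
    case True
    then show ?thesis by (intro exI[of _ "[]"]) auto
  next
    case False
    define a' where "a' = (LEAST s. a < s \<and> (x, s) \<in> VS)"
    have ex: "a < b \<and> (x, b) \<in> VS" using False less.prems by auto
    have a': "a < a' \<and> (x, a') \<in> VS" unfolding a'_def by (rule LeastI[of _ b]) (rule ex)
    have a'b: "a' \<le> b" unfolding a'_def by (rule Least_le) (rule ex)
    have lt: "b - a' < b - a" using a' a'b ex by linarith
    have nb: "\<forall>s. a < s \<and> s < a' \<longrightarrow> (x, s) \<notin> VS"
      unfolding a'_def using not_less_Least by blast
    have arc: "((x, a), (x, a')) \<in> FS VS" unfolding FS_def using a' nb less.prems by blast
    obtain W where W: "chn (x, a') W (x, b)" "\<forall>be\<in>set W. \<not> fst be \<and> snd be \<in> FS VS \<and> fst (fst (snd be)) = x"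
      using less.hyps[of a', OF lt] a' a'b less.prems by blast
    show ?thesis
      by (intro exI[of _ "(False, ((x, a), (x, a'))) # W"]) (use W arc in auto)
  qed
qed

locale ctx =
  fixes I :: "('n, 'k) sndrr" and P :: "'n part" and VS :: "'n tnode set" and ES :: "'n tarc set"
  assumes inst: "snd_instance I" and vp: "valid_partition I P" and pn: "partial_network I P VS ES"
    and p1: "P1' I P VS" and p2: "P2' I P VS ES"
begin

lemma fin_nodes: "finite (nodes I)" using inst unfolding snd_instance_def by auto
lemma arcs_sub: "arcs I \<subseteq> nodes I \<times> nodes I" using inst unfolding snd_instance_def by auto
lemma fin_arcs: "finite (arcs I)" using fin_nodes arcs_sub finite_subset by blast

lemma fin_P: "v \<in> nodes I \<Longrightarrow> finite (P v)"
proof -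
  assume v: "v \<in> nodes I"
  then have "partition_on (outarcs (arcs I) v) (P v)" using vp unfolding valid_partition_def by auto
  then have "P v \<subseteq> Pow (outarcs (arcs I) v)" unfolding partition_on_def by auto
  moreover have "finite (outarcs (arcs I) v)" using fin_arcs unfolding outarcs_def by auto
  ultimately show ?thesis using finite_subset by blast
qed

lemma fin_Vaux: "finite (Vaux I P)"
  unfolding Vaux_def copies_def using fin_nodes fin_P by auto

lemma fin_VT: "finite (VT I P)" unfolding VT_def using fin_Vaux by auto

lemma Vk_sub: "k \<in> comms I \<Longrightarrow> Vk I P k \<subseteq> Vaux I P"
  using inst unfolding Vk_def Vaux_def copies_def snd_instance_def by blast

lemma Ek_Eaux: "Ek I P k \<subseteq> Eaux I P" unfolding Ek_def by auto

lemma Ek_arc: "k \<in> comms I \<Longrightarrow> (x, z) \<in> Ek I P k \<Longrightarrow> (fst x, fst z) \<in> arcs I"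
  using inst unfolding Ek_def snd_instance_def by auto

lemma tau_pos: "(v, w) \<in> arcs I \<Longrightarrow> tau I (v, w) > 0"
  using inst unfolding snd_instance_def by auto

lemma horizon_ge: "k \<in> comms I \<Longrightarrow> dl I k \<le> horizon I"
  unfolding horizon_def using inst unfolding snd_instance_def by auto

lemma fin_EkT: "k \<in> comms I \<Longrightarrow> finite (EkT I P k)"
proof -
  assume k: "k \<in> comms I"
  have "EkT I P k \<subseteq> VT I P \<times> VT I P"
    unfolding EkT_def VT_def Ek_def using Vk_sub[OF k] by auto
  then show ?thesis using fin_VT finite_subset by blast
qed

lemma fin_FkT: "k \<in> comms I \<Longrightarrow> finite (FkT I P k)"
proof -
  assume k: "k \<in> comms I"
  have "FkT I P k \<subseteq> VT I P \<times> VT I P"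
    unfolding FkT_def VT_def using Vk_sub[OF k] by auto
  then show ?thesis using fin_VT finite_subset by blast
qed

lemma VS_VT: "VS \<subseteq> VT I P" using pn unfolding partial_network_def by auto

lemma fin_VS: "finite VS" using VS_VT fin_VT finite_subset by blast

lemma P_sub: "v \<in> nodes I \<Longrightarrow> X \<in> P v \<Longrightarrow> X \<subseteq> outarcs (arcs I) v"
  using vp unfolding valid_partition_def partition_on_def by auto

lemma Eaux_sub: "Eaux I P \<subseteq> Vaux I P \<times> Vaux I P"
proof
  fix e assume "e \<in> Eaux I P"
  then obtain v X z where e: "e = ((v, Some X), z)" "v \<in> nodes I" "X \<in> P v" "(v, fst z) \<in> X" "z \<in> copies P (fst z)"
    unfolding Eaux_def by blast
  have "(v, fst z) \<in> arcs I" using P_sub[OF e(2,3)] e(4) unfolding outarcs_def by auto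
  then have "fst z \<in> nodes I" using arcs_sub by auto
  then show "e \<in> Vaux I P \<times> Vaux I P"
    using e unfolding Vaux_def copies_def by auto
qed

lemma ES_sub: "ES \<subseteq> VT I P \<times> VT I P"
proof
  fix e assume "e \<in> ES"
  then obtain x z t t' where e: "e = ((x, t), (z, t'))" "(x, t) \<in> VT I P" "(x, z) \<in> Eaux I P"
     "t' \<le> t + gtau I (x, z)" "t + gtau I (x, z) \<le> horizon I"
    using pn unfolding partial_network_def by blast
  have "z \<in> Vaux I P" using Eaux_sub e(3) by auto
  then show "e \<in> VT I P \<times> VT I P" using e unfolding VT_def by auto
qed

lemma fin_ES: "finite ES" using finite_subset[OF ES_sub] fin_VT by blast

lemma fin_FS: "finite (FS VS)"
proof -
  have "FS VS \<subseteq> VS \<times> VS" unfolding FS_def by auto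
  then show ?thesis using fin_VS finite_subset by blast
qed

lemma zero_in: "x \<in> Vaux I P \<Longrightarrow> (x, 0) \<in> VS"
  using p1 unfolding P1'_def Vaux_def by auto

end



context ctx begin

definition R :: "'n tnode \<Rightarrow> 'n tnode" where "R p = (fst p, rho VS (fst p) (snd p))"

definition okS :: "'k \<Rightarrow> 'n tarc set \<Rightarrow> bool \<times> 'n tarc \<Rightarrow> bool" where
  "okS k M be = (if fst be then snd be \<in> EkS I P ES k \<and> snd be \<in> piS I VS ` M else snd be \<in> FkS I P VS k)"

lemma okS_mono: "okS k M be \<Longrightarrow> M \<subseteq> M' \<Longrightarrow> okS k M' be"
  unfolding okS_def by (auto split: if_splits)

lemma hold_chainS:
  assumes k: "k \<in> comms I" and x: "x \<in> Vk I P k" and ab: "a \<le> b"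
  shows "\<exists>W. chn (R (x, a)) W (R (x, b)) \<and> (\<forall>be\<in>set W. okS k M be)"
proof -
  have x0: "(x, 0) \<in> VS" using zero_in Vk_sub[OF k] x by blast
  obtain W where W: "chn (x, rho VS x a) W (x, rho VS x b)"
      "\<forall>be\<in>set W. \<not> fst be \<and> snd be \<in> FS VS \<and> fst (fst (snd be)) = x"
    using hold_chain[of x "rho VS x a" VS "rho VS x b"] rho_latest[OF x0] rho_mono[OF x0 ab]
    unfolding latest_def by blast
  show ?thesis using W x unfolding R_def okS_def FkS_def by (intro exI[of _ W]) auto
qed

lemma map_walk:
  assumes k: "k \<in> comms I"
  shows "chn s W t \<Longrightarrow> \<forall>be\<in>set W. good (EkT I P k) (FkT I P k) xm xh be \<Longrightarrow>
    \<exists>W'. chn (R s) W' (R t) \<and> (\<forall>be\<in>set W'. okS k {e. (True, e) \<in> set W} be)"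
proof (induction W arbitrary: s)
  case Nil
  then show ?case by (intro exI[of _ "[]"]) auto
next
  case (Cons b0 W)
  obtain b e where be: "b0 = (b, e)" by (cases b0)
  have es: "fst e = s" and ch: "chn (snd e) W t" using Cons.prems be by auto
  obtain W2 where W2: "chn (R (snd e)) W2 (R t)" "\<forall>be\<in>set W2. okS k {e. (True, e) \<in> set W} be"
    using Cons.IH[OF ch] Cons.prems(2) by auto
  have W2': "\<forall>be\<in>set W2. okS k {e. (True, e) \<in> set (b0 # W)} be"
  proof
    fix bx assume "bx \<in> set W2"
    then have "okS k {e. (True, e) \<in> set W} bx" using W2(2) by blast
    moreover have "{e. (True, e) \<in> set W} \<subseteq> {e. (True, e) \<in> set (b0 # W)}" by auto
    ultimately show "okS k {e. (True, e) \<in> set (b0 # W)} bx" by (rule okS_mono)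
  qed
  show ?case
  proof (cases b)
    case True
    have "good (EkT I P k) (FkT I P k) xm xh (b, e)" using Cons.prems(2) be by simp
    then have eE: "e \<in> EkT I P k" using True unfolding good_def by simp
    then obtain x z t0 where e: "e = ((x, t0), (z, t0 + gtau I (x, z)))" "(x, z) \<in> Ek I P k"
        "t0 + gtau I (x, z) \<le> horizon I"
      unfolding EkT_def by auto
    have xV: "x \<in> Vk I P k" "z \<in> Vk I P k" using e(2) unfolding Ek_def by auto
    have x0: "(x, 0) \<in> VS" and z0: "(z, 0) \<in> VS" using zero_in Vk_sub[OF k] xV by blast+
    define t1 where "t1 = rho VS x t0"
    have t1: "(x, t1) \<in> VS" "t1 \<le> t0" using rho_latest[OF x0, of t0] unfolding t1_def latest_def by auto
    define e' where "e' = piS I VS e"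
    have e'eq: "e' = ((x, t1), (z, rho VS z (t1 + gtau I (x, z))))"
      unfolding e'_def piS_def e t1_def by simp
    have Ea: "(x, z) \<in> Eaux I P" using Ek_Eaux e(2) by blast
    have P2x: "\<forall>t t'. (x, t) \<in> VS \<and> t + gtau I (x, z) \<le> horizon I \<and> latest VS z (t + gtau I (x, z)) t'
         \<longrightarrow> ((x, t), (z, t')) \<in> ES"
      using bspec[OF p2[unfolded P2'_def] Ea] by simp
    have lt1: "latest VS z (t1 + gtau I (x, z)) (rho VS z (t1 + gtau I (x, z)))" by (rule rho_latest[OF z0])
    have le1: "t1 + gtau I (x, z) \<le> horizon I" using t1(2) e(3) by linarith
    have "e' \<in> ES" unfolding e'eq using P2x t1(1) le1 lt1 by blast
    then have e'S: "e' \<in> EkS I P ES k" unfolding EkS_def e'eq using e(2) by auto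
    obtain H where H: "chn (R (z, t1 + gtau I (x, z))) H (R (snd e))" "\<forall>be\<in>set H. okS k {e. (True, e) \<in> set (b0 # W)} be"
      using hold_chainS[OF k xV(2), where a="t1 + gtau I (x, z)" and b="t0 + gtau I (x, z)" and M="{e. (True, e) \<in> set (b0 # W)}"] t1(2) e(1) by force
    show ?thesis
    proof (intro exI[of _ "(True, e') # H @ W2"] conjI)
      have c1: "chn (snd e') H (R (snd e))" using H(1) e'eq unfolding R_def by (simp add: t1_def)
      have "chn (snd e') (H @ W2) (R t)" unfolding chn_append using c1 W2(1) by blast
      moreover have "s = (x, t0)" using es e(1) by simp
      then have "fst e' = R s" using e'eq unfolding R_def by (simp add: t1_def)
      ultimately show "chn (R s) ((True, e') # H @ W2) (R t)" by simp
      have "e \<in> {e. (True, e) \<in> set (b0 # W)}" using be True by simp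
      then have "okS k {e. (True, e) \<in> set (b0 # W)} (True, e')"
        unfolding okS_def using e'S unfolding e'_def by simp
      then show "\<forall>bea\<in>set ((True, e') # H @ W2). okS k {e. (True, e) \<in> set (b0 # W)} bea"
        using H(2) W2' unfolding set_append set_simps by blast
    qed
  next
    case False
    have "good (EkT I P k) (FkT I P k) xm xh (b, e)" using Cons.prems(2) be by simp
    then have eF: "e \<in> FkT I P k" using False unfolding good_def by simp
    then obtain x t0 where e: "e = ((x, t0), (x, t0 + 1))" "x \<in> Vk I P k"
      unfolding FkT_def by auto
    obtain H where H: "chn (R (x, t0)) H (R (snd e))" "\<forall>be\<in>set H. okS k {e. (True, e) \<in> set (b0 # W)} be"
      using hold_chainS[OF k e(2), where a=t0 and b="t0 + 1" and M="{e. (True, e) \<in> set (b0 # W)}"] e(1) by force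
    have "R (x, t0) = R s" using es e(1) by simp
    then have h1: "chn (R s) H (R (snd e))" using H(1) by simp
    have "chn (R s) (H @ W2) (R t)" unfolding chn_append using h1 W2(1) by blast
    moreover have "\<forall>bea\<in>set (H @ W2). okS k {e. (True, e) \<in> set (b0 # W)} bea"
      using H(2) W2' unfolding set_append by blast
    ultimately show ?thesis by blast
  qed
qed

end


context ctx begin

lemma walk_time:
  assumes k: "k \<in> comms I"
  shows "chn s W t \<Longrightarrow> \<forall>be\<in>set W. good (EkT I P k) (FkT I P k) xm xh be \<Longrightarrow>
    real (snd s) + (\<Sum>e\<in>{e. (True, e) \<in> set W}. real (tau I (uarc e))) \<le> real (snd t)"
proof (induction W arbitrary: s)
  case Nil
  then show ?case by simp
next
  case (Cons be W)
  obtain b e where be: "be = (b, e)" by (cases be)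
  have es: "fst e = s" and ch: "chn (snd e) W t" using Cons.prems be by auto
  have IH: "real (snd (snd e)) + (\<Sum>e\<in>{e. (True, e) \<in> set W}. real (tau I (uarc e))) \<le> real (snd t)"
    using Cons.IH ch Cons.prems by auto
  have fin: "finite {e. (True, e) \<in> set W}"
    by (rule finite_subset[of _ "snd ` set W"]) (auto intro: rev_image_eqI)
  show ?case
  proof (cases b)
    case True
    then have eE: "e \<in> EkT I P k" using Cons.prems be unfolding good_def by auto
    then obtain x z t0 where e: "e = ((x, t0), (z, t0 + gtau I (x, z)))"
      unfolding EkT_def by auto
    have st: "{e'. (True, e') \<in> set (be # W)} = insert e {e. (True, e) \<in> set W}" using be True by auto
    have "(\<Sum>e\<in>{e'. (True, e') \<in> set (be # W)}. real (tau I (uarc e))) \<le>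
          real (tau I (uarc e)) + (\<Sum>e\<in>{e. (True, e) \<in> set W}. real (tau I (uarc e)))"
      unfolding st using fin by (simp add: sum.insert_if)
    moreover have "snd (snd e) = snd s + tau I (uarc e)" using e es unfolding uarc_def gtau_def by auto
    ultimately show ?thesis using IH by simp
  next
    case False
    then have eF: "e \<in> FkT I P k" using Cons.prems be unfolding good_def by auto
    then obtain x t0 where e: "e = ((x, t0), (x, t0 + 1))" unfolding FkT_def by auto
    have st: "{e'. (True, e') \<in> set (be # W)} = {e. (True, e) \<in> set W}" using be False by auto
    show ?thesis using IH e es unfolding st by auto
  qed
qed

lemma per_k:
  assumes k: "k \<in> comms I" and feas: "feasible_T I P (xm, xh, y)"
  shows "\<exists>P' M. chn (origc I P k, rel I k) P' ((dest I k, None), dl I k) \<and>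
     distinct (nds (origc I P k, rel I k) P') \<and> (\<forall>be\<in>set P'. okS k M be) \<and>
     M \<subseteq> EkT I P k \<and> (\<forall>e\<in>M. xm k e = 1) \<and>
     (\<Sum>e\<in>M. real (tau I (uarc e))) \<le> real (dl I k) - real (rel I k)"
proof -
  define src where "src = (origc I P k, rel I k)"
  define snk where "snk = ((dest I k, None) :: 'n gnode, dl I k)"
  have F: "\<forall>p\<in>VkT I P k. outflow (EkT I P k) (FkT I P k) (xm k) (xh k) p
        - inflow (EkT I P k) (FkT I P k) (xm k) (xh k) p = flowrhs I P k p"
    "\<forall>e. (e \<in> EkT I P k \<longrightarrow> xm k e \<in> {0, 1}) \<and> (e \<in> FkT I P k \<longrightarrow> xh k e \<in> {0, 1})"
    using feas k unfolding feasible_T_def by auto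
  have "\<exists>W. chn src W snk \<and> (\<forall>be\<in>set W. good (EkT I P k) (FkT I P k) (xm k) (xh k) be)"
  proof (rule walkT[where V = "VkT I P k"])
    show "finite (EkT I P k)" "finite (FkT I P k)" using fin_EkT fin_FkT k by auto
    show "\<forall>e\<in>EkT I P k. snd (fst e) < snd (snd e)"
      unfolding EkT_def gtau_def using Ek_arc[OF k] tau_pos by fastforce
    show "\<forall>e\<in>FkT I P k. snd (fst e) < snd (snd e)" unfolding FkT_def by auto
    show "\<forall>e\<in>EkT I P k. xm k e \<in> {0, 1}" using F(2) by blast
    show "\<forall>e\<in>FkT I P k. xh k e \<in> {0, 1}" using F(2) by blast
    show "\<forall>e\<in>EkT I P k \<union> FkT I P k. fst e \<in> VkT I P k"
      unfolding EkT_def FkT_def VkT_def Ek_def by auto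
    show "\<forall>p\<in>VkT I P k. outflow (EkT I P k) (FkT I P k) (xm k) (xh k) p - inflow (EkT I P k) (FkT I P k) (xm k) (xh k) p =
        (if p = src then 1 else 0) - (if p = snk then 1 else 0)"
      using F(1) unfolding flowrhs_def src_def snk_def by auto
    show "snk \<in> VkT I P k" unfolding snk_def VkT_def Vk_def using horizon_ge[OF k] by auto
  qed
  then obtain W where W: "chn src W snk" "\<forall>be\<in>set W. good (EkT I P k) (FkT I P k) (xm k) (xh k) be"
    by blast
  define M where "M = {e. (True, e) \<in> set W}"
  obtain W' where W': "chn (R src) W' (R snk)" "\<forall>be\<in>set W'. okS k M be"
    using map_walk[OF k W] unfolding M_def by blast
  have inVS: "src \<in> VS" "snk \<in> VS" using p1 k unfolding P1'_def src_def snk_def by auto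
  have "R src = src" unfolding R_def using rho_self[of "fst src" "snd src" VS] inVS(1) by simp
  moreover have "R snk = snk" unfolding R_def using rho_self[of "fst snk" "snd snk" VS] inVS(2) by simp
  ultimately obtain P' where P': "set P' \<subseteq> set W'" "chn src P' snk" "distinct (nds src P')"
    using chn_simplify W'(1) by metis
  have "M \<subseteq> EkT I P k" "\<forall>e\<in>M. xm k e = 1" using W(2) unfolding M_def good_def by auto
  moreover have "(\<Sum>e\<in>M. real (tau I (uarc e))) \<le> real (dl I k) - real (rel I k)"
    using walk_time[OF k W] unfolding M_def src_def snk_def by simp
  ultimately show ?thesis using P' W'(2) unfolding src_def snk_def by blast
qed

end


lemma count_lemma:
  fixes L :: "(bool \<times> 'a) list"
  assumes "finite A" "finite B" "\<forall>be\<in>set L. (fst be \<longrightarrow> snd be \<in> A) \<and> (\<not> fst be \<longrightarrow> snd be \<in> B)"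
  shows "(\<Sum>e\<in>{e\<in>A. Q e}. (if (True, e) \<in> set L then 1 else 0 :: real)) +
         (\<Sum>e\<in>{e\<in>B. Q e}. (if (False, e) \<in> set L then 1 else 0 :: real)) = real (card {be\<in>set L. Q (snd be)})"
proof -
  have s1: "(\<Sum>e\<in>{e\<in>A. Q e}. (if (True, e) \<in> set L then 1 else 0 :: real)) = real (card {e. (True, e) \<in> set L \<and> Q e})"
  proof -
    have "(\<Sum>e\<in>{e\<in>A. Q e}. (if (True, e) \<in> set L then 1 else 0 :: real)) = real (card ({e\<in>A. Q e} \<inter> {e. (True, e) \<in> set L}))"
      using assms(1) by (simp add: sum.If_cases)
    also have "{e\<in>A. Q e} \<inter> {e. (True, e) \<in> set L} = {e. (True, e) \<in> set L \<and> Q e}" using assms(3) by force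
    finally show ?thesis .
  qed
  have s2: "(\<Sum>e\<in>{e\<in>B. Q e}. (if (False, e) \<in> set L then 1 else 0 :: real)) = real (card {e. (False, e) \<in> set L \<and> Q e})"
  proof -
    have "(\<Sum>e\<in>{e\<in>B. Q e}. (if (False, e) \<in> set L then 1 else 0 :: real)) = real (card ({e\<in>B. Q e} \<inter> {e. (False, e) \<in> set L}))"
      using assms(2) by (simp add: sum.If_cases)
    also have "{e\<in>B. Q e} \<inter> {e. (False, e) \<in> set L} = {e. (False, e) \<in> set L \<and> Q e}" using assms(3) by force
    finally show ?thesis .
  qed
  have fT: "finite {e. (True, e) \<in> set L \<and> Q e}"
    by (rule finite_subset[of _ "snd ` set L"]) (auto intro: rev_image_eqI)
  have fF: "finite {e. (False, e) \<in> set L \<and> Q e}"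
    by (rule finite_subset[of _ "snd ` set L"]) (auto intro: rev_image_eqI)
  have eq: "{be\<in>set L. Q (snd be)} = Pair True ` {e. (True, e) \<in> set L \<and> Q e} \<union> Pair False ` {e. (False, e) \<in> set L \<and> Q e}"
  proof (rule set_eqI)
    fix be :: "bool \<times> 'a"
    obtain b e where "be = (b, e)" by (cases be)
    then show "be \<in> {be\<in>set L. Q (snd be)} \<longleftrightarrow> be \<in> Pair True ` {e. (True, e) \<in> set L \<and> Q e} \<union> Pair False ` {e. (False, e) \<in> set L \<and> Q e}"
      by (cases b) auto
  qed
  have "card {be\<in>set L. Q (snd be)} = card {e. (True, e) \<in> set L \<and> Q e} + card {e. (False, e) \<in> set L \<and> Q e}"
    unfolding eq by (subst card_Un_disjoint) (use fT fF in \<open>auto simp: card_image inj_on_def\<close>)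
  then show ?thesis using s1 s2 by simp
qed

lemma sum_set_le_image:
  fixes g :: "'a \<Rightarrow> real"
  assumes "finite M" "S \<subseteq> f ` M" "\<forall>e\<in>M. 0 \<le> g (f e)"
  shows "sum g S \<le> (\<Sum>e\<in>M. g (f e))"
proof -
  have "sum g S \<le> sum g (f ` M)"
    using assms by (intro sum_mono2) auto
  also have "\<dots> \<le> sum (g \<circ> f) M" by (rule sum_image_le) (use assms in auto)
  finally show ?thesis by simp
qed



locale ctx2 = ctx I P VS ES
  for I :: "('n, 'k) sndrr" and P :: "'n part" and VS :: "'n tnode set" and ES :: "'n tarc set" +
  fixes xm xh :: "'k \<Rightarrow> 'n tarc \<Rightarrow> real" and y :: "'n darc \<Rightarrow> nat"
    and Pk :: "'k \<Rightarrow> (bool \<times> 'n tarc) list" and Mk :: "'k \<Rightarrow> 'n tarc set"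
  assumes feas: "feasible_T I P (xm, xh, y)"
    and PkM: "\<forall>k\<in>comms I. chn (origc I P k, rel I k) (Pk k) ((dest I k, None), dl I k) \<and>
     distinct (nds (origc I P k, rel I k) (Pk k)) \<and> (\<forall>be\<in>set (Pk k). okS k (Mk k) be) \<and>
     Mk k \<subseteq> EkT I P k \<and> (\<forall>e\<in>Mk k. xm k e = 1) \<and>
     (\<Sum>e\<in>Mk k. real (tau I (uarc e))) \<le> real (dl I k) - real (rel I k)"
begin

definition xm' :: "'k \<Rightarrow> 'n tarc \<Rightarrow> real" where
  "xm' k e = (if k \<in> comms I \<and> (True, e) \<in> set (Pk k) then 1 else 0)"
definition xh' :: "'k \<Rightarrow> 'n tarc \<Rightarrow> real" where
  "xh' k e = (if k \<in> comms I \<and> (False, e) \<in> set (Pk k) then 1 else 0)"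
definition Bs :: "'n darc \<Rightarrow> 'n darc set" where
  "Bs a = {b\<in>AT I. fst (fst b) = fst (fst a) \<and> fst (snd b) = fst (snd a) \<and>
     (\<exists>X\<in>P (fst (fst a)). (fst (fst a), fst (snd a)) \<in> X \<and> rho VS (fst (fst a), Some X) (snd (fst b)) = snd (fst a))}"
definition y' :: "'n darc \<Rightarrow> nat" where
  "y' a = (\<Sum>b\<in>Bs a. y b)"

lemma fin_AT: "finite (AT I)"
proof -
  have "AT I \<subseteq> (nodes I \<times> {0..horizon I}) \<times> (nodes I \<times> {0..horizon I})"
    unfolding AT_def using arcs_sub by auto
  then show ?thesis using fin_nodes finite_subset by blast
qed

lemma fin_EkS: "finite (EkS I P ES k)" unfolding EkS_def using fin_ES by auto
lemma fin_FkS: "finite (FkS I P VS k)" unfolding FkS_def using fin_FS by auto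

lemma PT: "k \<in> comms I \<Longrightarrow> (True, e) \<in> set (Pk k) \<Longrightarrow> e \<in> EkS I P ES k \<and> e \<in> piS I VS ` Mk k"
  using PkM unfolding okS_def by fastforce
lemma PF: "k \<in> comms I \<Longrightarrow> (False, e) \<in> set (Pk k) \<Longrightarrow> e \<in> FkS I P VS k"
  using PkM unfolding okS_def by fastforce

lemma xm_nn: "k \<in> comms I \<Longrightarrow> 0 \<le> xm k e"
proof -
  assume k: "k \<in> comms I"
  have "(e \<in> EkT I P k \<longrightarrow> xm k e \<in> {0, 1}) \<and> (e \<notin> EkT I P k \<longrightarrow> xm k e = 0)"
  proof -
    have "\<forall>k\<in>comms I. \<forall>e.
        (e \<in> EkT I P k \<longrightarrow> xm k e \<in> {0, 1}) \<and> (e \<notin> EkT I P k \<longrightarrow> xm k e = 0) \<and>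
        (e \<in> FkT I P k \<longrightarrow> xh k e \<in> {0, 1}) \<and> (e \<notin> FkT I P k \<longrightarrow> xh k e = 0)"
      using feas unfolding feasible_T_def prod.case by blast
    then show ?thesis using k by blast
  qed
  then show ?thesis by (cases "e \<in> EkT I P k") auto
qed

lemma conservation:
  assumes k: "k \<in> comms I"
  shows "outflow (EkS I P ES k) (FkS I P VS k) (xm' k) (xh' k) p
        - inflow (EkS I P ES k) (FkS I P VS k) (xm' k) (xh' k) p = flowrhs I P k p"
proof -
  have L: "\<forall>be\<in>set (Pk k). (fst be \<longrightarrow> snd be \<in> EkS I P ES k) \<and> (\<not> fst be \<longrightarrow> snd be \<in> FkS I P VS k)"
    using PT[OF k] PF[OF k] by (metis prod.collapse)
  have o: "outflow (EkS I P ES k) (FkS I P VS k) (xm' k) (xh' k) p = real (card {be\<in>set (Pk k). fst (snd be) = p})"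
    unfolding outflow_def xm'_def xh'_def using count_lemma[OF fin_EkS fin_FkS L, of "\<lambda>e. fst e = p"] k by simp
  have i: "inflow (EkS I P ES k) (FkS I P VS k) (xm' k) (xh' k) p = real (card {be\<in>set (Pk k). snd (snd be) = p})"
    unfolding inflow_def xm'_def xh'_def using count_lemma[OF fin_EkS fin_FkS L, of "\<lambda>e. snd e = p"] k by simp
  have c: "chn (origc I P k, rel I k) (Pk k) ((dest I k, None), dl I k)"
    "distinct (nds (origc I P k, rel I k) (Pk k))" using PkM k by auto
  show ?thesis unfolding o i flowrhs_def using chn_conserv[OF c, of p] by simp
qed

lemma calET_fin: "b \<in> AT I \<Longrightarrow> finite (calET P b)"
proof -
  assume b: "b \<in> AT I"
  then obtain v w t where bb: "b = ((v, t), (w, t + tau I (v, w)))" "(v, w) \<in> arcs I" "t + tau I (v, w) \<le> horizon I"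
    unfolding AT_def by auto
  have vw: "v \<in> nodes I" "w \<in> nodes I" using bb(2) arcs_sub by auto
  have "calET P b \<subseteq> VT I P \<times> VT I P"
    unfolding bb calET_def VT_def Vaux_def using vw bb(3) by (auto simp: copies_def)
  then show ?thesis using fin_VT finite_subset by blast
qed

lemma calET_disj: "e \<in> calET P b1 \<Longrightarrow> e \<in> calET P b2 \<Longrightarrow> b1 = b2"
  unfolding calET_def by (cases b1, cases b2) (auto split: prod.splits simp: copies_def)

lemma key:
  assumes k: "k \<in> comms I" and eM: "e \<in> EkT I P k" and ea: "piS I VS e \<in> calES P ES a"
  shows "\<exists>b\<in>Bs a. e \<in> calET P b"
proof -
  obtain x z t0 where e: "e = ((x, t0), (z, t0 + gtau I (x, z)))" "(x, z) \<in> Ek I P k"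
      "t0 + gtau I (x, z) \<le> horizon I"
    using eM unfolding EkT_def by auto
  obtain v X where x: "x = (v, Some X)" "v \<in> nodes I" "X \<in> P v" "(v, fst z) \<in> X" "z \<in> copies P (fst z)"
    using e(2) Ek_Eaux unfolding Eaux_def by blast
  obtain va ta wa ta' where a: "a = ((va, ta), (wa, ta'))" by (metis prod.collapse)
  from ea obtain X' where X': "fst (fst (piS I VS e)) = (va, Some X')" "snd (fst (piS I VS e)) = ta"
     "X' \<in> P va" "(va, wa) \<in> X'" "fst (snd (piS I VS e)) \<in> copies P wa"
    unfolding calES_def a by auto
  have eqs: "v = va" "X = X'" "rho VS x t0 = ta" "fst z = wa"
    using X' x e unfolding piS_def by (auto simp: copies_def)
  define b where "b = ((v, t0), (wa, t0 + tau I (v, wa)))"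
  have arc: "(v, wa) \<in> arcs I" using Ek_arc[OF k e(2)] x eqs by simp
  have bAT: "b \<in> AT I" unfolding b_def AT_def using arc e(3) x eqs unfolding gtau_def by auto
  have "b \<in> Bs a" unfolding Bs_def a using bAT eqs x unfolding b_def by auto
  moreover have "e \<in> calET P b"
  proof -
    have zc: "z \<in> copies P wa" using x(5) eqs(4) by simp
    have "e = (((v, Some X), t0), (z, t0 + tau I (v, wa)))" using e(1) x(1) eqs(4) unfolding gtau_def by simp
    then show ?thesis unfolding calET_def b_def using zc x(3,4) eqs(4) by (cases z) auto
  qed
  ultimately show ?thesis by blast
qed

end

context ctx2 begin

lemma Mk_one: "k \<in> comms I \<Longrightarrow> e \<in> Mk k \<Longrightarrow> xm k e = 1"
  using PkM by blast
lemma Mk_sub: "k \<in> comms I \<Longrightarrow> Mk k \<subseteq> EkT I P k"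
  using PkM by blast
lemma Bs_AT: "Bs a \<subseteq> AT I" unfolding Bs_def by blast
lemma calES_ES: "calES P ES a \<subseteq> ES" unfolding calES_def by (cases a) auto

lemma cap_k:
  assumes k: "k \<in> comms I"
  shows "(\<Sum>e\<in>calES P ES a. xm' k e) \<le> (\<Sum>b\<in>Bs a. \<Sum>e\<in>calET P b. xm k e)"
proof -
  define S where "S = {e\<in>calES P ES a. (True, e) \<in> set (Pk k)}"
  define T where "T = {e\<in>Mk k. piS I VS e \<in> calES P ES a}"
  have finC: "finite (calES P ES a)" using finite_subset[OF calES_ES fin_ES] .
  have finM: "finite (Mk k)" using finite_subset[OF Mk_sub[OF k] fin_EkT[OF k]] .
  have finT: "finite T" unfolding T_def using finM by simp
  have finB: "finite (Bs a)" using finite_subset[OF Bs_AT fin_AT] .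
  have "(\<Sum>e\<in>calES P ES a. xm' k e) = (\<Sum>e\<in>calES P ES a. if (True, e) \<in> set (Pk k) then 1 else 0)"
    using k by (simp add: xm'_def)
  also have "\<dots> = real (card (calES P ES a \<inter> {e. (True, e) \<in> set (Pk k)}))"
    using finC by (simp add: sum.If_cases)
  also have "calES P ES a \<inter> {e. (True, e) \<in> set (Pk k)} = S" unfolding S_def by blast
  finally have s1: "(\<Sum>e\<in>calES P ES a. xm' k e) = real (card S)" .
  have "card S \<le> card (piS I VS ` T)"
  proof (rule card_mono)
    show "finite (piS I VS ` T)" using finT by simp
    show "S \<subseteq> piS I VS ` T"
    proof
      fix e' assume "e' \<in> S"
      then have h: "(True, e') \<in> set (Pk k)" "e' \<in> calES P ES a" by (auto simp: S_def)
      then obtain e where "e \<in> Mk k" "e' = piS I VS e" using PT[OF k] by blast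
      then show "e' \<in> piS I VS ` T" unfolding T_def using h(2) by blast
    qed
  qed
  also have "card (piS I VS ` T) \<le> card T" by (rule card_image_le[OF finT])
  finally have s2: "real (card S) \<le> real (card T)" by simp
  have s3: "real (card T) = (\<Sum>e\<in>T. xm k e)"
  proof -
    have "(\<Sum>e\<in>T. xm k e) = (\<Sum>e\<in>T. 1)"
      by (rule sum.cong) (auto simp: T_def intro: Mk_one[OF k])
    then show ?thesis by simp
  qed
  have finU: "finite (\<Union>b\<in>Bs a. calET P b)"
    using finB calET_fin Bs_AT by blast
  have TU: "T \<subseteq> (\<Union>b\<in>Bs a. calET P b)"
  proof
    fix e assume "e \<in> T"
    then have "e \<in> EkT I P k" "piS I VS e \<in> calES P ES a" using Mk_sub[OF k] unfolding T_def by auto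
    then show "e \<in> (\<Union>b\<in>Bs a. calET P b)" using key[OF k] by blast
  qed
  have s4: "(\<Sum>e\<in>T. xm k e) \<le> (\<Sum>e\<in>(\<Union>b\<in>Bs a. calET P b). xm k e)"
    by (rule sum_mono2[OF finU TU]) (rule xm_nn[OF k])
  have s5: "(\<Sum>e\<in>(\<Union>b\<in>Bs a. calET P b). xm k e) = (\<Sum>b\<in>Bs a. \<Sum>e\<in>calET P b. xm k e)"
  proof (rule sum.UNION_disjoint[OF finB])
    show "\<forall>b\<in>Bs a. finite (calET P b)" using calET_fin Bs_AT by blast
    show "\<forall>b1\<in>Bs a. \<forall>b2\<in>Bs a. b1 \<noteq> b2 \<longrightarrow> calET P b1 \<inter> calET P b2 = {}"
      using calET_disj by blast
  qed
  show ?thesis using s1 s2 s3 s4 s5 by linarith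
qed

end


context ctx begin

lemma Eaux_arc: "(x, z) \<in> Eaux I P \<Longrightarrow> (fst x, fst z) \<in> arcs I"
proof -
  assume "(x, z) \<in> Eaux I P"
  then obtain v X where e: "x = (v, Some X)" "v \<in> nodes I" "X \<in> P v" "(v, fst z) \<in> X"
    unfolding Eaux_def by blast
  then show ?thesis using P_sub[OF e(2,3)] unfolding outarcs_def by auto
qed

lemma part_unique: "v \<in> nodes I \<Longrightarrow> X1 \<in> P v \<Longrightarrow> X2 \<in> P v \<Longrightarrow> e \<in> X1 \<Longrightarrow> e \<in> X2 \<Longrightarrow> X1 = X2"
  using vp unfolding valid_partition_def partition_on_def disjoint_def by blast

lemma uarc_piS: "uarc (piS I VS e) = uarc e"
  unfolding uarc_def piS_def by simp

lemma fin_ET: "finite (ET I P)"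
proof -
  have "ET I P \<subseteq> VT I P \<times> VT I P"
    unfolding ET_def VT_def using Eaux_sub by auto
  then show ?thesis using fin_VT finite_subset by blast
qed

lemma ET_arc: "e \<in> ET I P \<Longrightarrow> uarc e \<in> arcs I"
  unfolding ET_def uarc_def using Eaux_arc by auto

lemma EkT_ET: "EkT I P k \<subseteq> ET I P"
  unfolding EkT_def ET_def using Ek_Eaux by blast

lemma fin_AS: "finite (AS I P VS)"
proof -
  have "AS I P VS \<subseteq> (nodes I \<times> {0..horizon I}) \<times> (nodes I \<times> {0..horizon I})"
    unfolding AS_def latest_def using arcs_sub by auto
  then show ?thesis using fin_nodes finite_subset by blast
qed

end

context ctx2 begin

lemma Bs_disj:
  assumes a1: "a1 \<in> AS I P VS" and a2: "a2 \<in> AS I P VS" and b1: "b \<in> Bs a1" and b2: "b \<in> Bs a2"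
  shows "a1 = a2"
proof -
  obtain v1 t1 w1 t1' where A1: "a1 = ((v1, t1), (w1, t1'))" "latest (NS I P VS) w1 (t1 + tau I (v1, w1)) t1'"
    using a1 unfolding AS_def by blast
  obtain v2 t2 w2 t2' where A2: "a2 = ((v2, t2), (w2, t2'))" "latest (NS I P VS) w2 (t2 + tau I (v2, w2)) t2'"
    using a2 unfolding AS_def by blast
  have bAT: "b \<in> AT I" using b1 Bs_AT by blast
  obtain X1 where X1: "fst (fst b) = v1" "fst (snd b) = w1" "X1 \<in> P v1" "(v1, w1) \<in> X1"
      "rho VS (v1, Some X1) (snd (fst b)) = t1"
    using b1 unfolding Bs_def A1 by auto
  obtain X2 where X2: "fst (fst b) = v2" "fst (snd b) = w2" "X2 \<in> P v2" "(v2, w2) \<in> X2"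
      "rho VS (v2, Some X2) (snd (fst b)) = t2"
    using b2 unfolding Bs_def A2 by auto
  have vv: "v1 = v2" "w1 = w2" using X1 X2 by auto
  have "(v1, w1) \<in> arcs I" using bAT X1(1,2) unfolding AT_def by auto
  then have "v1 \<in> nodes I" using arcs_sub by auto
  then have "X1 = X2" using part_unique X1(3,4) X2(3,4) vv by auto
  then have "t1 = t2" using X1(5) X2(5) vv by simp
  moreover have "t1' = t2'" using latest_unique A1(2) A2(2) vv \<open>t1 = t2\<close> by metis
  ultimately show ?thesis using A1(1) A2(1) vv by simp
qed

lemma dem_nn: "0 \<le> real (dem I k)" by simp

lemma capacity:
  assumes a: "a \<in> AS I P VS"
  shows "(\<Sum>k\<in>comms I. \<Sum>e\<in>calES P ES a. real (dem I k) * xm' k e)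
        \<le> real (cap I (fst (fst a), fst (snd a))) * real (y' a)"
proof -
  have capT: "\<forall>b\<in>AT I. (\<Sum>k\<in>comms I. \<Sum>e\<in>calET P b. real (dem I k) * xm k e) \<le> real (cap I (fst (fst b), fst (snd b))) * real (y b)"
    using feas unfolding feasible_T_def prod.case by blast
  have "(\<Sum>k\<in>comms I. \<Sum>e\<in>calES P ES a. real (dem I k) * xm' k e)
      = (\<Sum>k\<in>comms I. real (dem I k) * (\<Sum>e\<in>calES P ES a. xm' k e))"
    by (simp add: sum_distrib_left)
  also have "\<dots> \<le> (\<Sum>k\<in>comms I. real (dem I k) * (\<Sum>b\<in>Bs a. \<Sum>e\<in>calET P b. xm k e))"
    by (rule sum_mono) (rule mult_left_mono[OF cap_k dem_nn])
  also have "\<dots> = (\<Sum>b\<in>Bs a. \<Sum>k\<in>comms I. \<Sum>e\<in>calET P b. real (dem I k) * xm k e)"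
    by (simp add: sum_distrib_left sum.swap[of _ "comms I"])
  also have "\<dots> \<le> (\<Sum>b\<in>Bs a. real (cap I (fst (fst b), fst (snd b))) * real (y b))"
    by (rule sum_mono) (use capT Bs_AT in blast)
  also have "\<dots> = (\<Sum>b\<in>Bs a. real (cap I (fst (fst a), fst (snd a))) * real (y b))"
    by (rule sum.cong) (auto simp: Bs_def)
  also have "\<dots> = real (cap I (fst (fst a), fst (snd a))) * real (y' a)"
    unfolding y'_def by (simp add: sum_distrib_left)
  finally show ?thesis .
qed

lemma transit:
  assumes k: "k \<in> comms I"
  shows "(\<Sum>e\<in>EkS I P ES k. real (tau I (uarc e)) * xm' k e) \<le> real (dl I k) - real (rel I k)"
proof -
  have finM: "finite (Mk k)" using finite_subset[OF Mk_sub[OF k] fin_EkT[OF k]] .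
  have "(\<Sum>e\<in>EkS I P ES k. real (tau I (uarc e)) * xm' k e)
      = (\<Sum>e\<in>EkS I P ES k. if (True, e) \<in> set (Pk k) then real (tau I (uarc e)) else 0)"
    using k by (intro sum.cong) (auto simp: xm'_def)
  also have "\<dots> = (\<Sum>e\<in>{e\<in>EkS I P ES k. (True, e) \<in> set (Pk k)}. real (tau I (uarc e)))"
    by (rule sum.inter_filter[symmetric]) (rule fin_EkS)
  also have "\<dots> \<le> (\<Sum>e\<in>Mk k. real (tau I (uarc (piS I VS e))))"
    by (rule sum_set_le_image[OF finM]) (use PT[OF k] in auto)
  also have "\<dots> = (\<Sum>e\<in>Mk k. real (tau I (uarc e)))" by (simp add: uarc_piS)
  also have "\<dots> \<le> real (dl I k) - real (rel I k)" using PkM k by blast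
  finally show ?thesis .
qed

lemma feasS: "feasible_S I P VS ES (xm', xh', y')"
  unfolding feasible_S_def prod.case
proof (intro conjI ballI allI impI)
  fix k p assume "k \<in> comms I" "p \<in> VkS I P VS k"
  then show "outflow (EkS I P ES k) (FkS I P VS k) (xm' k) (xh' k) p -
         inflow (EkS I P ES k) (FkS I P VS k) (xm' k) (xh' k) p = flowrhs I P k p"
    using conservation by blast
next
  fix a assume "a \<in> AS I P VS"
  then show "(\<Sum>k\<in>comms I. \<Sum>e\<in>calES P ES a. real (dem I k) * xm' k e)
        \<le> real (cap I (fst (fst a), fst (snd a))) * real (y' a)" by (rule capacity)
next
  fix k assume "k \<in> comms I"
  then show "(\<Sum>e\<in>EkS I P ES k. real (tau I (uarc e)) * xm' k e) \<le> real (dl I k) - real (rel I k)"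
    by (rule transit)
next
  fix k e assume "k \<in> comms I" "e \<in> EkS I P ES k"
  then show "xm' k e \<in> {0, 1}" by (simp add: xm'_def)
next
  fix k e assume "k \<in> comms I" "e \<notin> EkS I P ES k"
  then show "xm' k e = 0" using PT[of k e] by (auto simp: xm'_def)
next
  fix k e assume "k \<in> comms I" "e \<in> FkS I P VS k"
  then show "xh' k e \<in> {0, 1}" by (simp add: xh'_def)
next
  fix k e assume "k \<in> comms I" "e \<notin> FkS I P VS k"
  then show "xh' k e = 0" using PF[of k e] by (auto simp: xh'_def)
qed

lemma fixed_cost:
  "(\<Sum>a\<in>AS I P VS. fcost I (fst (fst a), fst (snd a)) * real (y' a))
   \<le> (\<Sum>b\<in>AT I. fcost I (fst (fst b), fst (snd b)) * real (y b))"
proof -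
  have fpos: "b \<in> AT I \<Longrightarrow> 0 \<le> fcost I (fst (fst b), fst (snd b))" for b
    using inst unfolding snd_instance_def AT_def by fastforce
  have "(\<Sum>a\<in>AS I P VS. fcost I (fst (fst a), fst (snd a)) * real (y' a))
     = (\<Sum>a\<in>AS I P VS. \<Sum>b\<in>Bs a. fcost I (fst (fst b), fst (snd b)) * real (y b))"
  proof (rule sum.cong)
    fix a assume "a \<in> AS I P VS"
    have "fcost I (fst (fst a), fst (snd a)) * real (y' a) = (\<Sum>b\<in>Bs a. fcost I (fst (fst a), fst (snd a)) * real (y b))"
      unfolding y'_def by (simp add: sum_distrib_left)
    also have "\<dots> = (\<Sum>b\<in>Bs a. fcost I (fst (fst b), fst (snd b)) * real (y b))"
      by (rule sum.cong) (auto simp: Bs_def)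
    finally show "fcost I (fst (fst a), fst (snd a)) * real (y' a) = (\<Sum>b\<in>Bs a. fcost I (fst (fst b), fst (snd b)) * real (y b))" .
  qed simp
  also have "\<dots> = (\<Sum>b\<in>(\<Union>a\<in>AS I P VS. Bs a). fcost I (fst (fst b), fst (snd b)) * real (y b))"
  proof (rule sum.UNION_disjoint[symmetric, OF fin_AS])
    show "\<forall>a\<in>AS I P VS. finite (Bs a)" using finite_subset[OF Bs_AT fin_AT] by blast
    show "\<forall>a1\<in>AS I P VS. \<forall>a2\<in>AS I P VS. a1 \<noteq> a2 \<longrightarrow> Bs a1 \<inter> Bs a2 = {}"
      using Bs_disj by blast
  qed
  also have "\<dots> \<le> (\<Sum>b\<in>AT I. fcost I (fst (fst b), fst (snd b)) * real (y b))"
  proof (rule sum_mono2[OF fin_AT])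
    show "(\<Union>a\<in>AS I P VS. Bs a) \<subseteq> AT I" using Bs_AT by blast
    fix b assume "b \<in> AT I - (\<Union>a\<in>AS I P VS. Bs a)"
    then show "0 \<le> fcost I (fst (fst b), fst (snd b)) * real (y b)" using fpos[of b] by simp
  qed
  finally show ?thesis .
qed

lemma move_cost_k:
  assumes k: "k \<in> comms I"
  shows "(\<Sum>e\<in>ES. ucost I k (uarc e) * real (dem I k) * xm' k e)
       \<le> (\<Sum>e\<in>ET I P. ucost I k (uarc e) * real (dem I k) * xm k e)"
proof -
  have finM: "finite (Mk k)" using finite_subset[OF Mk_sub[OF k] fin_EkT[OF k]] .
  have gnn: "e \<in> ET I P \<Longrightarrow> 0 \<le> ucost I k (uarc e) * real (dem I k)" for e
    using ET_arc[of e] inst k unfolding snd_instance_def by (fastforce intro: mult_nonneg_nonneg)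
  have "(\<Sum>e\<in>ES. ucost I k (uarc e) * real (dem I k) * xm' k e)
      = (\<Sum>e\<in>ES. if (True, e) \<in> set (Pk k) then ucost I k (uarc e) * real (dem I k) else 0)"
    using k by (intro sum.cong) (auto simp: xm'_def)
  also have "\<dots> = (\<Sum>e\<in>{e\<in>ES. (True, e) \<in> set (Pk k)}. ucost I k (uarc e) * real (dem I k))"
    by (rule sum.inter_filter[symmetric]) (rule fin_ES)
  also have "\<dots> \<le> (\<Sum>e\<in>Mk k. ucost I k (uarc (piS I VS e)) * real (dem I k))"
  proof (rule sum_set_le_image[OF finM])
    show "{e \<in> ES. (True, e) \<in> set (Pk k)} \<subseteq> piS I VS ` Mk k" using PT[OF k] by auto
    show "\<forall>e\<in>Mk k. 0 \<le> ucost I k (uarc (piS I VS e)) * real (dem I k)"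
      unfolding uarc_piS using gnn Mk_sub[OF k] EkT_ET by blast
  qed
  also have "\<dots> = (\<Sum>e\<in>Mk k. ucost I k (uarc e) * real (dem I k) * xm k e)"
    by (rule sum.cong) (auto simp: uarc_piS Mk_one[OF k])
  also have "\<dots> \<le> (\<Sum>e\<in>ET I P. ucost I k (uarc e) * real (dem I k) * xm k e)"
  proof (rule sum_mono2[OF fin_ET])
    show "Mk k \<subseteq> ET I P" using Mk_sub[OF k] EkT_ET by blast
    show "\<And>e. e \<in> ET I P - Mk k \<Longrightarrow> 0 \<le> ucost I k (uarc e) * real (dem I k) * xm k e"
      using gnn xm_nn[OF k] by (simp add: mult_nonneg_nonneg)
  qed
  finally show ?thesis .
qed

lemma cost_le: "cost_S I P VS ES (xm', xh', y') \<le> cost_T I P (xm, xh, y)"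
  unfolding cost_S_def cost_T_def prod.case
  using fixed_cost sum_mono[of "comms I", OF move_cost_k] by (meson add_mono)

end


theorem theorem3:
  fixes I :: "('n, 'k) sndrr" and P :: "'n part"
    and VS :: "'n tnode set" and ES :: "'n tarc set"
  assumes "snd_instance I"
    and "valid_partition I P"
    and "partial_network I P VS ES"
    and "P1' I P VS"
    and "P2' I P VS ES"
  shows "opt_S I P VS ES \<le> opt_T I P"
proof -
  have c: "ctx I P VS ES" using assms by (rule ctx.intro)
  show ?thesis unfolding opt_S_def opt_T_def
  proof (rule INF_mono)
    fix s assume "s \<in> {s. feasible_T I P s}"
    obtain xm xh y where s: "s = (xm, xh, y)" by (cases s)
    have F: "feasible_T I P (xm, xh, y)" using \<open>s \<in> _\<close> s by simp
    have "\<forall>k\<in>comms I. \<exists>P'. \<exists>M. chn (origc I P k, rel I k) P' ((dest I k, None), dl I k) \<and>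
     distinct (nds (origc I P k, rel I k) P') \<and> (\<forall>be\<in>set P'. ctx.okS I P VS ES k M be) \<and>
     M \<subseteq> EkT I P k \<and> (\<forall>e\<in>M. xm k e = 1) \<and>
     (\<Sum>e\<in>M. real (tau I (uarc e))) \<le> real (dl I k) - real (rel I k)"
      using ctx.per_k[OF c _ F] by blast
    then obtain Pk where "\<forall>k\<in>comms I. \<exists>M. chn (origc I P k, rel I k) (Pk k) ((dest I k, None), dl I k) \<and>
     distinct (nds (origc I P k, rel I k) (Pk k)) \<and> (\<forall>be\<in>set (Pk k). ctx.okS I P VS ES k M be) \<and>
     M \<subseteq> EkT I P k \<and> (\<forall>e\<in>M. xm k e = 1) \<and>
     (\<Sum>e\<in>M. real (tau I (uarc e))) \<le> real (dl I k) - real (rel I k)"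
      by (rule bchoice[THEN exE]) blast
    then obtain Mk where PkM: "\<forall>k\<in>comms I. chn (origc I P k, rel I k) (Pk k) ((dest I k, None), dl I k) \<and>
     distinct (nds (origc I P k, rel I k) (Pk k)) \<and> (\<forall>be\<in>set (Pk k). ctx.okS I P VS ES k (Mk k) be) \<and>
     Mk k \<subseteq> EkT I P k \<and> (\<forall>e\<in>Mk k. xm k e = 1) \<and>
     (\<Sum>e\<in>Mk k. real (tau I (uarc e))) \<le> real (dl I k) - real (rel I k)"
      by (rule bchoice[THEN exE]) blast
    have c2: "ctx2 I P VS ES xm xh y Pk Mk"
      by (rule ctx2.intro[OF c]) (rule ctx2_axioms.intro[OF F PkM])
    show "\<exists>s'\<in>{s. feasible_S I P VS ES s}. ereal (cost_S I P VS ES s') \<le> ereal (cost_T I P s)"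
      using ctx2.feasS[OF c2] ctx2.cost_le[OF c2] s by auto
  qed
qed

end
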